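(* Let $H$ be an inner product space over $\mathbb{K}\in\{\mathbb{R},\mathbb{C}\}$. Let $x,y\in H$ with $x\neq 0$, $y\neq 0$, and let $\delta>0$ be such that $\|x-y\|\le \delta$. (a) If $\|y\|>\delta$, then $$0\le \|x\|^2\|y\|^2-|\langle x,y\rangle|^2\le \|x\|^2\|y\|^2-[\operatorname{Re}\langle x,y\rangle]^2\le \delta^2\|x\|^2 .$$ Moreover, the constant $1$ in front of $\delta^2$ is best possible. That is, for every $k\in(0,1)$ there exist an inner product space $H$, nonzero $x,y\in H$ and $\delta>0$ with $\|x-y\|\le\delta$ and $\|y\|>\delta$ such that $\|x\|^2\|y\|^2-[\operatorname{Re}\langle x,y\rangle]^2> k\,\delta^2\|x\|^2$. (b) If $\|y\|=\delta$, then $$\|x\|^2\le 2\operatorname{Re}\langle x,y\rangle\le 2|\langle x,y\rangle|,$$ and the constant $2$ is best possible in both inequalities. That is, for every $c<2$ there exist such $H,x,y,\delta$ with $\|x-y\|\le\delta=\|y\|$ and $\|x\|^2>c\operatorname{Re}\langle x,y\rangle$, and likewise with $\|x\|^2>c|\langle x,y\rangle|$. (c) If $\|y\|<\delta$, then $$\|x\|^2\le \delta^2-\|y\|^2+2\operatorname{Re}\langle x,y\rangle\le \delta^2-\|y\|^2+2|\langle x,y\rangle|,$$ and the constant $2$ is best possible. That is, for every $c<2$ there exist such $H,x,y,\delta$ with $\|x-y\|\le\delta$, $\|y\|<\delta$ and $\|x\|^2>\delta^2-\|y\|^2+c\operatorname{Re}\langle x,y\rangle$, and likewise with $c|\langle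 x,y\rangle|$ in place of $c\operatorname{Re}\langle x,y\rangle$.
   Context: $\|u\|=\sqrt{\langle u,u\rangle}$ denotes the norm induced by the inner product. *)

theory Defs
  imports "HOL-Analysis.Analysis"
begin

text \<open>Complex inner product spaces (not available in the distribution).
  The inner product is linear in the first argument and conjugate-linear
  in the second; the norm is the induced one.\<close>

class complex_inner = real_normed_vector +
  fixes scaleC :: "complex \<Rightarrow> 'a \<Rightarrow> 'a"
    and cinner :: "'a \<Rightarrow> 'a \<Rightarrow> complex"
  assumes scaleC_add_right: "scaleC a (x + y) = scaleC a x + scaleC a y"
    and scaleC_add_left: "scaleC (a + b) x = scaleC a x + scaleC b x"
    and scaleC_scaleC: "scaleC a (scaleC b x) = scaleC (a * b) x"
    and scaleC_one: "scaleC 1 x = x"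
    and scaleC_of_real: "scaleC (complex_of_real r) x = scaleR r x"
    and cinner_commute: "cinner x y = cnj (cinner y x)"
    and cinner_add_left: "cinner (x + y) z = cinner x z + cinner y z"
    and cinner_scaleC_left: "cinner (scaleC a x) y = a * cinner x y"
    and cinner_self_nonneg: "Im (cinner x x) = 0 \<and> 0 \<le> Re (cinner x x)"
    and cinner_eq_zero_iff: "cinner x x = 0 \<longleftrightarrow> x = 0"
    and norm_eq_sqrt_cinner: "norm x = sqrt (Re (cinner x x))"

end

theory Submission
  imports Defs
begin


lemma ci_minus_left: "cinner (- x) y = - cinner (x::'a::complex_inner) y"
proof -
  have "scaleC (-1) x = - x" using scaleC_of_real[of "-1" x] by simp
  then show ?thesis by (metis cinner_scaleC_left mult_minus1)
qed

lemma ci_diff_left: "cinner (x - z) y = cinner x y - cinner (z::'a::complex_inner) y"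
  using cinner_add_left[of x "- z" y] ci_minus_left[of z y] by simp

lemma ci_add_right: "cinner x (y + z) = cinner x y + cinner (x::'a::complex_inner) z"
  by (metis cinner_commute cinner_add_left complex_cnj_add)

lemma ci_diff_right: "cinner x (y - z) = cinner x y - cinner (x::'a::complex_inner) z"
  by (metis cinner_commute ci_diff_left complex_cnj_diff)

lemma ci_scaleC_right: "cinner x (scaleC a y) = cnj a * cinner (x::'a::complex_inner) y"
  by (metis cinner_commute cinner_scaleC_left complex_cnj_mult)

lemma ci_self_real: "cinner x x = complex_of_real (Re (cinner (x::'a::complex_inner) x))"
  using cinner_self_nonneg[of x] by (intro complex_eqI) simp_all

lemma ci_norm_sq: "(norm x)\<^sup>2 = Re (cinner (x::'a::complex_inner) x)"
  using cinner_self_nonneg[of x] by (simp add: norm_eq_sqrt_cinner)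

lemma ci_CS:
  fixes x y :: "'a::complex_inner"
  assumes "x \<noteq> 0"
  shows "(cmod (cinner x y))\<^sup>2 \<le> (norm x)\<^sup>2 * (norm y)\<^sup>2"
proof -
  define A where "A = cinner x x"
  define p where "p = cinner x y"
  define B where "B = cinner y y"
  define w where "w = scaleC A y - scaleC (cnj p) x"
  have Ar: "cnj A = A" using ci_self_real[of x] unfolding A_def by (metis complex_cnj_complex_of_real)
  have yx: "cinner y x = cnj p" unfolding p_def by (rule cinner_commute)
  have cyw: "cinner y w = cnj A * B - p * cnj p"
    unfolding w_def by (simp add: ci_diff_right ci_scaleC_right yx B_def)
  have cxw: "cinner x w = 0"
    unfolding w_def by (simp add: ci_diff_right ci_scaleC_right Ar[unfolded A_def] A_def p_def[symmetric])
  have "cinner w w = A * cinner y w - cnj p * cinner x w"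
    unfolding w_def by (simp add: ci_diff_left cinner_scaleC_left)
  also have "\<dots> = A * (A * B - p * cnj p)" using cyw cxw Ar by simp
  finally have ww: "cinner w w = A * (A * B - p * cnj p)" .
  have Apos: "Re A > 0"
    using cinner_self_nonneg[of x] cinner_eq_zero_iff[of x] assms ci_self_real[of x]
    unfolding A_def by (metis less_eq_real_def of_real_0)
  have Aim: "A = complex_of_real (Re A)" unfolding A_def by (rule ci_self_real)
  have Bim: "B = complex_of_real (Re B)" unfolding B_def by (rule ci_self_real)
  have pp: "p * cnj p = complex_of_real ((cmod p)\<^sup>2)" by (metis complex_norm_square of_real_power)
  have "Re (cinner w w) = Re A * (Re A * Re B - (cmod p)\<^sup>2)"
    unfolding ww by (subst Aim, subst Bim, subst pp, simp)
  with cinner_self_nonneg[of w] Apos have "0 \<le> Re A * Re B - (cmod p)\<^sup>2"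
    by (metis zero_le_mult_iff not_le)
  then show ?thesis by (simp add: ci_norm_sq A_def B_def p_def)
qed

lemma ci_dist: "(norm (x - y))\<^sup>2 = (norm x)\<^sup>2 - 2 * Re (cinner x y) + (norm (y::'a::complex_inner))\<^sup>2"
proof -
  have "Re (cinner y x) = Re (cinner x y)" by (subst cinner_commute) simp
  then show ?thesis by (simp add: ci_norm_sq ci_diff_left ci_diff_right)
qed

lemma key_ineq:
  fixes a b p d :: real
  assumes "a - 2 * p + b \<le> d\<^sup>2" "a \<ge> 0"
  shows "a * b - p\<^sup>2 \<le> d\<^sup>2 * a"
proof -
  have "a * b - p\<^sup>2 \<le> a * (a - 2 * p + b)" using zero_le_power2[of "a - p"]
    by (simp add: power2_eq_square algebra_simps)
  also have "\<dots> \<le> a * d\<^sup>2" using assms by (simp add: mult_left_mono)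
  finally show ?thesis by (simp add: mult.commute)
qed

lemma real_dist: "(norm (x - y))\<^sup>2 = (norm x)\<^sup>2 - 2 * inner x y + (norm (y::'a::real_inner))\<^sup>2"
  by (simp add: power2_norm_eq_inner inner_diff_left inner_diff_right inner_commute)

lemma sq_le: "0 \<le> a \<Longrightarrow> (a::real) \<le> d \<Longrightarrow> a\<^sup>2 \<le> d\<^sup>2"
  by (simp add: power_mono)

theorem theorem1:
  shows
  \<comment> \<open>Real inner product spaces\<close>
  "(\<forall>(x::'a::real_inner) y (\<delta>::real).
      x \<noteq> 0 \<longrightarrow> y \<noteq> 0 \<longrightarrow> \<delta> > 0 \<longrightarrow> norm (x - y) \<le> \<delta> \<longrightarrow>
      (norm y > \<delta> \<longrightarrow>
         0 \<le> (norm x)\<^sup>2 * (norm y)\<^sup>2 - \<bar>inner x y\<bar>\<^sup>2 \<and>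
         (norm x)\<^sup>2 * (norm y)\<^sup>2 - \<bar>inner x y\<bar>\<^sup>2 \<le> (norm x)\<^sup>2 * (norm y)\<^sup>2 - (inner x y)\<^sup>2 \<and>
         (norm x)\<^sup>2 * (norm y)\<^sup>2 - (inner x y)\<^sup>2 \<le> \<delta>\<^sup>2 * (norm x)\<^sup>2) \<and>
      (norm y = \<delta> \<longrightarrow>
         (norm x)\<^sup>2 \<le> 2 * inner x y \<and> 2 * inner x y \<le> 2 * \<bar>inner x y\<bar>) \<and>
      (norm y < \<delta> \<longrightarrow>
         (norm x)\<^sup>2 \<le> \<delta>\<^sup>2 - (norm y)\<^sup>2 + 2 * inner x y \<and>
         \<delta>\<^sup>2 - (norm y)\<^sup>2 + 2 * inner x y \<le> \<delta>\<^sup>2 - (norm y)\<^sup>2 + 2 * \<bar>inner x y\<bar>))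
  \<and>
  \<comment> \<open>Complex inner product spaces\<close>
   (\<forall>(x::'b::complex_inner) y (\<delta>::real).
      x \<noteq> 0 \<longrightarrow> y \<noteq> 0 \<longrightarrow> \<delta> > 0 \<longrightarrow> norm (x - y) \<le> \<delta> \<longrightarrow>
      (norm y > \<delta> \<longrightarrow>
         0 \<le> (norm x)\<^sup>2 * (norm y)\<^sup>2 - (cmod (cinner x y))\<^sup>2 \<and>
         (norm x)\<^sup>2 * (norm y)\<^sup>2 - (cmod (cinner x y))\<^sup>2 \<le> (norm x)\<^sup>2 * (norm y)\<^sup>2 - (Re (cinner x y))\<^sup>2 \<and>
         (norm x)\<^sup>2 * (norm y)\<^sup>2 - (Re (cinner x y))\<^sup>2 \<le> \<delta>\<^sup>2 * (norm x)\<^sup>2) \<and>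
      (norm y = \<delta> \<longrightarrow>
         (norm x)\<^sup>2 \<le> 2 * Re (cinner x y) \<and> 2 * Re (cinner x y) \<le> 2 * cmod (cinner x y)) \<and>
      (norm y < \<delta> \<longrightarrow>
         (norm x)\<^sup>2 \<le> \<delta>\<^sup>2 - (norm y)\<^sup>2 + 2 * Re (cinner x y) \<and>
         \<delta>\<^sup>2 - (norm y)\<^sup>2 + 2 * Re (cinner x y) \<le> \<delta>\<^sup>2 - (norm y)\<^sup>2 + 2 * cmod (cinner x y)))
  \<and>
  \<comment> \<open>Sharpness, witnessed in the real inner product space complex (= R^2)\<close>
   (\<forall>k::real. 0 < k \<and> k < 1 \<longrightarrow>
      (\<exists>(x::complex) y (\<delta>::real). x \<noteq> 0 \<and> y \<noteq> 0 \<and> \<delta> > 0 \<and> norm (x - y) \<le> \<delta> \<and> norm y > \<delta> \<and>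
         (norm x)\<^sup>2 * (norm y)\<^sup>2 - (inner x y)\<^sup>2 > k * \<delta>\<^sup>2 * (norm x)\<^sup>2))
  \<and>
   (\<forall>c::real. c < 2 \<longrightarrow>
      (\<exists>(x::complex) y (\<delta>::real). x \<noteq> 0 \<and> y \<noteq> 0 \<and> \<delta> > 0 \<and> norm (x - y) \<le> \<delta> \<and> norm y = \<delta> \<and>
         (norm x)\<^sup>2 > c * inner x y) \<and>
      (\<exists>(x::complex) y (\<delta>::real). x \<noteq> 0 \<and> y \<noteq> 0 \<and> \<delta> > 0 \<and> norm (x - y) \<le> \<delta> \<and> norm y = \<delta> \<and>
         (norm x)\<^sup>2 > c * \<bar>inner x y\<bar>))
  \<and>
   (\<forall>c::real. c < 2 \<longrightarrow>
      (\<exists>(x::complex) y (\<delta>::real). x \<noteq> 0 \<and> y \<noteq> 0 \<and> \<delta> > 0 \<and> norm (x - y) \<le> \<delta> \<and> norm y < \<delta> \<and>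
         (norm x)\<^sup>2 > \<delta>\<^sup>2 - (norm y)\<^sup>2 + c * inner x y) \<and>
      (\<exists>(x::complex) y (\<delta>::real). x \<noteq> 0 \<and> y \<noteq> 0 \<and> \<delta> > 0 \<and> norm (x - y) \<le> \<delta> \<and> norm y < \<delta> \<and>
         (norm x)\<^sup>2 > \<delta>\<^sup>2 - (norm y)\<^sup>2 + c * \<bar>inner x y\<bar>))"
proof (intro conjI allI impI)
  fix x y :: "'a::real_inner" and \<delta> :: real
  assume h: "x \<noteq> 0" "y \<noteq> 0" "\<delta> > 0" "norm (x - y) \<le> \<delta>"
  have D: "(norm x)\<^sup>2 - 2 * inner x y + (norm y)\<^sup>2 \<le> \<delta>\<^sup>2"
    using sq_le[OF norm_ge_zero h(4)] real_dist[of x y] by simp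
  have cs: "\<bar>inner x y\<bar> \<le> norm x * norm y" by (rule Cauchy_Schwarz_ineq2)
  have "\<bar>inner x y\<bar>\<^sup>2 \<le> (norm x * norm y)\<^sup>2" using sq_le[OF abs_ge_zero cs] .
  then show "0 \<le> (norm x)\<^sup>2 * (norm y)\<^sup>2 - \<bar>inner x y\<bar>\<^sup>2" by (simp add: power_mult_distrib)
  show "(norm x)\<^sup>2 * (norm y)\<^sup>2 - \<bar>inner x y\<bar>\<^sup>2 \<le> (norm x)\<^sup>2 * (norm y)\<^sup>2 - (inner x y)\<^sup>2" by simp
  show "(norm x)\<^sup>2 * (norm y)\<^sup>2 - (inner x y)\<^sup>2 \<le> \<delta>\<^sup>2 * (norm x)\<^sup>2"
    by (rule key_ineq[OF D]) simp
  { assume "norm y = \<delta>"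
    then show "(norm x)\<^sup>2 \<le> 2 * inner x y" using D by simp }
  show "2 * inner x y \<le> 2 * \<bar>inner x y\<bar>" by simp
  show "(norm x)\<^sup>2 \<le> \<delta>\<^sup>2 - (norm y)\<^sup>2 + 2 * inner x y" using D by simp
  show "\<delta>\<^sup>2 - (norm y)\<^sup>2 + 2 * inner x y \<le> \<delta>\<^sup>2 - (norm y)\<^sup>2 + 2 * \<bar>inner x y\<bar>" by simp
next
  fix x y :: "'b::complex_inner" and \<delta> :: real
  assume h: "x \<noteq> 0" "y \<noteq> 0" "\<delta> > 0" "norm (x - y) \<le> \<delta>"
  have D: "(norm x)\<^sup>2 - 2 * Re (cinner x y) + (norm y)\<^sup>2 \<le> \<delta>\<^sup>2"
    using sq_le[OF norm_ge_zero h(4)] ci_dist[of x y] by simp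
  show "0 \<le> (norm x)\<^sup>2 * (norm y)\<^sup>2 - (cmod (cinner x y))\<^sup>2" using ci_CS[OF h(1), of y] by simp
  have "(Re (cinner x y))\<^sup>2 \<le> (cmod (cinner x y))\<^sup>2"
    using sq_le[OF abs_ge_zero abs_Re_le_cmod] by simp
  then show "(norm x)\<^sup>2 * (norm y)\<^sup>2 - (cmod (cinner x y))\<^sup>2 \<le> (norm x)\<^sup>2 * (norm y)\<^sup>2 - (Re (cinner x y))\<^sup>2" by simp
  show "(norm x)\<^sup>2 * (norm y)\<^sup>2 - (Re (cinner x y))\<^sup>2 \<le> \<delta>\<^sup>2 * (norm x)\<^sup>2"
    by (rule key_ineq[OF D]) simp
  { assume "norm y = \<delta>"
    then show "(norm x)\<^sup>2 \<le> 2 * Re (cinner x y)" using D by simp }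
  show "2 * Re (cinner x y) \<le> 2 * cmod (cinner x y)" using complex_Re_le_cmod by simp
  show "(norm x)\<^sup>2 \<le> \<delta>\<^sup>2 - (norm y)\<^sup>2 + 2 * Re (cinner x y)" using D by simp
  show "\<delta>\<^sup>2 - (norm y)\<^sup>2 + 2 * Re (cinner x y) \<le> \<delta>\<^sup>2 - (norm y)\<^sup>2 + 2 * cmod (cinner x y)"
    using complex_Re_le_cmod by simp
next
  fix k :: real assume "0 < k \<and> k < 1"
  then show "\<exists>(x::complex) y (\<delta>::real). x \<noteq> 0 \<and> y \<noteq> 0 \<and> \<delta> > 0 \<and> norm (x - y) \<le> \<delta> \<and> norm y > \<delta> \<and>
         (norm x)\<^sup>2 * (norm y)\<^sup>2 - (inner x y)\<^sup>2 > k * \<delta>\<^sup>2 * (norm x)\<^sup>2"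
  proof -
    have n: "norm (1 + \<i>) = sqrt 2" by (simp add: cmod_def)
    have "sqrt 2 > 1" by (simp add: real_less_rsqrt)
    moreover have "inner (1::complex) (1 + \<i>) = 1" by (simp add: inner_complex_def)
    moreover have "norm (1 - (1 + \<i>)) = 1" by simp
    moreover have "(sqrt 2)\<^sup>2 = 2" by simp
    ultimately have F: "1 < sqrt 2" "inner (1::complex) (1 + \<i>) = 1" "norm (1 - (1 + \<i>)) = 1" "(sqrt 2)\<^sup>2 = 2" by auto
    show ?thesis
      by (rule exI[of _ 1], rule exI[of _ "1 + \<i>"], rule exI[of _ 1]) (use F \<open>0 < k \<and> k < 1\<close> n in \<open>simp add: complex_eq_iff del: real_sqrt_less_iff\<close>)
  qed
next
  fix c :: real assume c2: "c < 2"
  show "\<exists>(x::complex) y (\<delta>::real). x \<noteq> 0 \<and> y \<noteq> 0 \<and> \<delta> > 0 \<and> norm (x - y) \<le> \<delta> \<and> norm y = \<delta> \<and>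
         (norm x)\<^sup>2 > c * inner x y"
    by (rule exI[of _ 2], rule exI[of _ 1], rule exI[of _ 1]) (use c2 in \<open>simp add: inner_complex_def\<close>)
  show "\<exists>(x::complex) y (\<delta>::real). x \<noteq> 0 \<and> y \<noteq> 0 \<and> \<delta> > 0 \<and> norm (x - y) \<le> \<delta> \<and> norm y = \<delta> \<and>
         (norm x)\<^sup>2 > c * \<bar>inner x y\<bar>"
    by (rule exI[of _ 2], rule exI[of _ 1], rule exI[of _ 1]) (use c2 in \<open>simp add: inner_complex_def\<close>)
next
  fix c :: real assume c: "c < 2"
  have s: "(sqrt (3 - c))\<^sup>2 = 3 - c" using c by simp
  have s1: "sqrt (3 - c) > 1" using c by (simp add: real_less_rsqrt)
  show "\<exists>(x::complex) y (\<delta>::real). x \<noteq> 0 \<and> y \<noteq> 0 \<and> \<delta> > 0 \<and> norm (x - y) \<le> \<delta> \<and> norm y < \<delta> \<and>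
         (norm x)\<^sup>2 > \<delta>\<^sup>2 - (norm y)\<^sup>2 + c * inner x y"
    by (rule exI[of _ 2], rule exI[of _ 1], rule exI[of _ "sqrt (3 - c)"]) (use c s s1 in \<open>simp add: inner_complex_def\<close>)
  show "\<exists>(x::complex) y (\<delta>::real). x \<noteq> 0 \<and> y \<noteq> 0 \<and> \<delta> > 0 \<and> norm (x - y) \<le> \<delta> \<and> norm y < \<delta> \<and>
         (norm x)\<^sup>2 > \<delta>\<^sup>2 - (norm y)\<^sup>2 + c * \<bar>inner x y\<bar>"
    by (rule exI[of _ 2], rule exI[of _ 1], rule exI[of _ "sqrt (3 - c)"]) (use c s s1 in \<open>simp add: inner_complex_def\<close>)
qed

end
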